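(* Let $p={\rm char}(\mathbb{F}_q)>3$ and let $k$ be a positive integer. Then, as polynomials in $\mathbb{F}_q[x]$, $$2^{p^k}D_{p^k,3}(1,x)+1=3(1-4x)^{\frac{p^k-1}{2}}.$$
   Context: $q=p^e$ with $p>3$ prime. For $n\ge 1$ and $a\in\mathbb{F}_q$, $D_{n,3}(a,x)=\sum_{i=0}^{\lfloor n/2\rfloor}\frac{n-3i}{n-i}\binom{n-i}{i}(-x)^i a^{n-2i}\in\mathbb{F}_q[x]$, where each coefficient $\frac{n-3i}{n-i}\binom{n-i}{i}$ is an integer read modulo $p$; and $D_{0,3}(a,x)=-1$. *)

theory Defs
  imports "HOL-Computational_Algebra.Polynomial"
begin

text \<open>Integer coefficient (n-3i)/(n-i) * binom(n-i,i); the division is exact for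
  1 <= n and i <= n div 2.\<close>
definition dickson3_coeff :: "nat \<Rightarrow> nat \<Rightarrow> int" where
  "dickson3_coeff n i = ((int n - 3 * int i) * int ((n - i) choose i)) div int (n - i)"

definition D3 :: "nat \<Rightarrow> 'a::field \<Rightarrow> 'a poly" where
  "D3 n a = (if n = 0 then - 1 else
     (\<Sum>i\<in>{0..n div 2}. smult (of_int (dickson3_coeff n i) * a ^ (n - 2 * i)) ([:0, -1:] ^ i)))"

end

theory Submission
  imports Defs "HOL-Computational_Algebra.Computational_Algebra"
begin

lemma L_aux:
  fixes p k i :: nat and a :: "nat \<Rightarrow> int"
  assumes p: "prime p" and a: "\<forall>j<i. 0 < a j \<and> a j < int p ^ k"
  shows "\<exists>e U W. (\<Prod>j<i. a j) = int p ^ e * U \<and> (\<Prod>j<i. a j - int p ^ k) = int p ^ e * W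
            \<and> \<not> int p dvd U \<and> int p dvd (W - U)"
  using a
proof (induction i)
  case 0
  then show ?case by (intro exI[of _ 0] exI[of _ 1]) (use p in \<open>auto simp: prime_gt_1_nat\<close>)
next
  case (Suc i)
  then obtain e U W where IH: "(\<Prod>j<i. a j) = int p ^ e * U" "(\<Prod>j<i. a j - int p ^ k) = int p ^ e * W"
     "\<not> int p dvd U" "int p dvd (W - U)" by auto
  have ai: "0 < a i" "a i < int p ^ k" using Suc.prems by auto
  have pi: "prime (int p)" using p by auto
  have nu: "\<not> is_unit (int p)" using pi not_prime_unit by blast
  have ai0: "a i \<noteq> 0" using ai by simp
  obtain u where u: "a i = int p ^ multiplicity (int p) (a i) * u" "\<not> int p dvd u"
    using multiplicity_decompose'[OF ai0 nu] by blast
  define f where "f = multiplicity (int p) (a i)"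
  have "int p ^ f dvd a i" using u(1) unfolding f_def by (metis dvd_triv_left)
  hence "int p ^ f \<le> a i" using ai by (simp add: zdvd_imp_le)
  hence "int p ^ f < int p ^ k" using ai by linarith
  hence fk: "f < k" using p prime_gt_1_nat
    by (metis of_nat_less_imp_less of_nat_power power_less_imp_less_exp)
  define q where "q = int p ^ (k - f)"
  have pq: "int p dvd q" using fk q_def by (simp add: dvd_power)
  have kk: "int p ^ k = int p ^ f * q" using fk by (simp add: q_def flip: power_add)
  have ai2: "a i - int p ^ k = int p ^ f * (u - q)" using u kk f_def by (simp add: algebra_simps)
  have c1: "(\<Prod>j<Suc i. a j) = int p ^ (e + f) * (U * u)"
    using IH(1) u f_def by (simp add: power_add algebra_simps)
  have "(\<Prod>j<Suc i. a j - int p ^ k) = (\<Prod>j<i. a j - int p ^ k) * (a i - int p ^ k)" by simp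
  also have "\<dots> = int p ^ (e + f) * (W * (u - q))" unfolding IH(2) ai2 by (simp add: power_add algebra_simps)
  finally have c2: "(\<Prod>j<Suc i. a j - int p ^ k) = int p ^ (e + f) * (W * (u - q))" .
  have c3: "\<not> int p dvd U * u" using IH(3) u(2) pi by (simp add: prime_dvd_mult_iff)
  have "W * (u - q) - U * u = (W - U) * (u - q) - U * q" by (simp add: algebra_simps)
  hence c4: "int p dvd W * (u - q) - U * u" using IH(4) pq by simp
  show ?case using c1 c2 c3 c4 by blast
qed

lemma L_main:
  fixes p k i :: nat and a :: "nat \<Rightarrow> int" and c d x y :: int
  assumes p: "prime p" and a: "\<forall>j<i. 0 < a j \<and> a j < int p ^ k"
    and d: "d \<noteq> 0" and c: "\<not> int p dvd c"
    and dx: "d * x = c * (\<Prod>j<i. a j)" and dy: "d * y = c * (\<Prod>j<i. a j - int p ^ k)"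
  shows "int p dvd (x - y)"
proof -
  obtain e U W where E: "(\<Prod>j<i. a j) = int p ^ e * U" "(\<Prod>j<i. a j - int p ^ k) = int p ^ e * W"
     "\<not> int p dvd U" "int p dvd (W - U)" using L_aux[OF p a] by auto
  have pi: "prime (int p)" using p by auto
  have nu: "\<not> is_unit (int p)" using pi not_prime_unit by blast
  obtain r where r: "d = int p ^ multiplicity (int p) d * r" "\<not> int p dvd r"
    using multiplicity_decompose'[OF d nu] by blast
  define v where "v = multiplicity (int p) d"
  have p0: "int p \<noteq> 0" using p by auto
  have ve: "v \<le> e"
  proof (rule ccontr)
    assume "\<not> v \<le> e"
    then obtain t where t: "v = e + Suc t" by (metis add_Suc_right less_imp_Suc_add not_le)
    have "d = int p ^ (e + Suc t) * r" using r(1) t v_def by simp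
    hence dd: "d = int p ^ e * (int p ^ Suc t * r)" by (metis power_add mult.assoc)
    have "int p ^ e * (int p ^ Suc t * r * x) = d * x" unfolding dd by (simp add: algebra_simps)
    also have "\<dots> = int p ^ e * (c * U)" unfolding dx E(1) by (simp add: algebra_simps)
    finally have "int p ^ e * (int p ^ Suc t * r * x) = int p ^ e * (c * U)" .
    hence "int p ^ Suc t * r * x = c * U" using p0 by simp
    hence "int p dvd c * U" by (metis dvd_mult2 dvd_power dvd_triv_left zero_less_Suc dvd_mult)
    thus False using c E(3) pi by (simp add: prime_dvd_mult_iff)
  qed
  then obtain s where s: "e = v + s" using le_Suc_ex by blast
  have dv: "d = int p ^ v * r" using r(1) v_def by simp
  have "int p ^ v * (r * (x - y)) = d * x - d * y" unfolding dv by (simp add: algebra_simps)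
  also have "\<dots> = c * (int p ^ e * U) - c * (int p ^ e * W)" using dx dy E(1,2) by simp
  also have "\<dots> = int p ^ v * (c * int p ^ s * (U - W))" using s by (simp add: power_add algebra_simps)
  finally have "int p ^ v * (r * (x - y)) = int p ^ v * (c * int p ^ s * (U - W))" .
  hence eq: "r * (x - y) = c * int p ^ s * (U - W)" using p0 by simp
  have "int p dvd c * int p ^ s * (U - W)" using E(4)
    by (metis dvd_mult dvd_minus_iff minus_diff_eq)
  hence "int p dvd r * (x - y)" using eq by simp
  thus ?thesis using r(2) pi by (simp add: prime_dvd_mult_iff)
qed


definition zg :: "int \<Rightarrow> nat \<Rightarrow> int" where
  "zg a k = (\<Prod>i=0..<k. a - int i) div fact k"

lemma zg_mult: "fact k * zg a k = (\<Prod>i=0..<k. a - int i)"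
proof -
  have "fact k dvd (\<Prod>i=0..<k. a - int i)"
    by (rule dvdI[OF sym[OF gbinomial_int_mult_fact[of k a]]])
  thus ?thesis unfolding zg_def by simp
qed

lemma zg_neg: "a < 0 \<Longrightarrow> zg a k = (-1)^k * int ((k + nat (- a) - 1) choose k)"
proof -
  assume "a < 0"
  have "fact k * zg a k = fact k * ((-1)^k * int ((k + nat (- a) - 1) choose k))"
    using zg_mult[of k a] gbinomial_int_mult_fact[of k a] gbinomial_neg[OF \<open>a < 0\<close>, of k] by simp
  thus ?thesis by simp
qed

lemma zg_nat: "zg (int N) k = int (N choose k)"
proof -
  have "fact k * zg (int N) k = fact k * int (N choose k)"
    using zg_mult[of k "int N"] gbinomial_int_mult_fact[of k "int N"] int_binomial[of N k] by simp
  thus ?thesis by simp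
qed

lemma G_cong:
  fixes p k N t :: nat
  assumes p: "prime p" and Nn: "N < p ^ k" and tN: "t \<le> N"
  shows "int p dvd (int (N choose t) - zg (int N - int p ^ k) t)"
proof -
  have "int p dvd (int (N choose t) - zg (int N - int p ^ k) t)"
  proof (rule L_main[OF p, where a = "\<lambda>j. int N - int j" and i = t and c = 1 and d = "fact t"])
    show "\<forall>j<t. 0 < int N - int j \<and> int N - int j < int p ^ k"
      using Nn tN by (auto simp flip: of_nat_power)
    show "fact t \<noteq> (0::int)" by simp
    show "\<not> int p dvd 1" using prime_gt_1_nat[OF p] by simp
    show "fact t * int (N choose t) = 1 * (\<Prod>j<t. int N - int j)"
      using gbinomial_int_mult_fact[of t "int N"] by (simp add: int_binomial atLeast0LessThan)
    show "fact t * zg (int N - int p ^ k) t = 1 * (\<Prod>j<t. int N - int j - int p ^ k)"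
      using zg_mult[of t "int N - int p ^ k"] by (simp add: atLeast0LessThan algebra_simps)
  qed
  thus ?thesis .
qed

lemma fact_double: "fact (2 * i) = (2::int) ^ i * fact i * (\<Prod>j<i. 2 * int j + 1)"
proof (induction i)
  case 0 then show ?case by simp
next
  case (Suc i)
  have "2 * Suc i = Suc (Suc (2*i))" by simp
  hence "fact (2 * Suc i) = (fact (Suc (Suc (2*i))) :: int)" by (simp only:)
  also have "\<dots> = of_nat (Suc (Suc (2*i))) * (of_nat (Suc (2*i)) * fact (2*i))" by (simp only: fact_Suc)
  also have "\<dots> = (2 * (int i + 1)) * (2 * int i + 1) * ((2::int) ^ i * fact i * (\<Prod>j<i. 2 * int j + 1))"
    by (simp only: Suc.IH) (simp add: algebra_simps)
  also have "\<dots> = (2 * 2 ^ i) * ((int i + 1) * fact i) * ((\<Prod>j<i. 2 * int j + 1) * (2 * int i + 1))"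
    by (simp only: mult_ac)
  also have "\<dots> = 2 ^ Suc i * fact (Suc i) * (\<Prod>j<Suc i. 2 * int j + 1)"
    by (simp only: power_Suc fact_Suc prod.lessThan_Suc) simp
  finally show ?case .
qed

lemma central_prod: "fact i * int ((2 * i) choose i) = (2::int) ^ i * (\<Prod>j<i. 2 * int j + 1)"
proof -
  have "fact i * fact (2 * i - i) * ((2 * i) choose i) = fact (2 * i)"
    by (rule binomial_fact_lemma) simp
  hence "fact i * fact i * ((2 * i) choose i) = (fact (2 * i) :: nat)" by simp
  hence "int (fact i * fact i * ((2 * i) choose i)) = int (fact (2 * i))" by (rule arg_cong)
  hence "fact i * fact i * int ((2 * i) choose i) = (fact (2 * i) :: int)"
    by (simp only: of_nat_mult of_nat_fact)
  hence "fact i * (fact i * int ((2 * i) choose i)) = (fact (2 * i) :: int)"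
    by (simp only: mult.assoc)
  also have "\<dots> = (2::int) ^ i * fact i * (\<Prod>j<i. 2 * int j + 1)" by (rule fact_double)
  also have "\<dots> = fact i * ((2::int) ^ i * (\<Prod>j<i. 2 * int j + 1))" by (simp only: mult_ac)
  finally have "fact i * (fact i * int ((2 * i) choose i)) = fact i * ((2::int) ^ i * (\<Prod>j<i. 2 * int j + 1))" .
  thus ?thesis by simp
qed

lemma M_cong:
  fixes p k m i :: nat
  assumes p: "prime p" and p2: "p \<noteq> 2" and nm: "p ^ k = 2 * m + 1" and im: "i \<le> m"
  shows "int p dvd (4 ^ i * int (m choose i) - (-1) ^ i * int ((2 * i) choose i))"
proof (rule L_main[OF p, where a = "\<lambda>j. int p ^ k - 1 - 2 * int j" and i = i and c = "2 ^ i" and d = "fact i"])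
  have nk: "int p ^ k = 2 * int m + 1" 
  proof -
    have "int (p ^ k) = int (2 * m + 1)" using nm by simp
    thus ?thesis by simp
  qed
  show "\<forall>j<i. 0 < int p ^ k - 1 - 2 * int j \<and> int p ^ k - 1 - 2 * int j < int p ^ k"
    by (intro allI impI conjI) (use im nk in linarith)+
  show "fact i \<noteq> (0::int)" by simp
  have "p > 2" using prime_ge_2_nat[OF p] p2 by linarith
  have "\<not> int p dvd 2"
  proof
    assume "int p dvd 2" hence "int p \<le> 2" by (rule zdvd_imp_le) simp
    thus False using \<open>p > 2\<close> by linarith
  qed
  moreover have pi: "prime (int p)" using p by simp
  ultimately show "\<not> int p dvd 2 ^ i" using prime_dvd_power[of "int p" 2 i] by auto
  have "fact i * (4 ^ i * int (m choose i)) = 2 ^ i * 2 ^ i * (\<Prod>j<i. int m - int j)"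
    using gbinomial_int_mult_fact[of i "int m"]
    by (simp add: int_binomial atLeast0LessThan algebra_simps flip: power_mult_distrib)
  also have "\<dots> = 2 ^ i * (\<Prod>j<i. 2 * (int m - int j))"
    by (subst prod.distrib) simp
  also have "\<dots> = 2 ^ i * (\<Prod>j<i. int p ^ k - 1 - 2 * int j)" by (simp add: nk algebra_simps)
  finally show "fact i * (4 ^ i * int (m choose i)) = 2 ^ i * (\<Prod>j<i. int p ^ k - 1 - 2 * int j)" .
  have "fact i * ((-1) ^ i * int ((2 * i) choose i)) = (-1) ^ i * (2 ^ i * (\<Prod>j<i. 2 * int j + 1))"
    using central_prod[of i] by (simp add: algebra_simps)
  also have "\<dots> = 2 ^ i * ((\<Prod>j<i. (-1::int)) * (\<Prod>j<i. 2 * int j + 1))"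
    by simp
  also have "\<dots> = 2 ^ i * (\<Prod>j<i. (-1) * (2 * int j + 1))"
    by (simp only: prod.distrib)
  also have "\<dots> = 2 ^ i * (\<Prod>j<i. int p ^ k - 1 - 2 * int j - int p ^ k)"
    by (rule arg_cong[where f = "\<lambda>x. 2 ^ i * x"], rule prod.cong) simp_all
  finally show "fact i * ((-1) ^ i * int ((2 * i) choose i)) = 2 ^ i * (\<Prod>j<i. int p ^ k - 1 - 2 * int j - int p ^ k)" .
qed


lemma dickson_int:
  fixes n j :: nat
  assumes "1 \<le> j" "2 * j < n"
  shows "dickson3_coeff n j = int ((n - j) choose j) - 2 * int ((n - j - 1) choose (j - 1))"
proof -
  have "n - j > 0" using assms by simp
  then obtain N where N: "n - j = Suc N" using gr0_implies_Suc by blast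
  obtain J where J: "j = Suc J" using assms by (cases j) auto
  have eq: "(n - j) * ((n - j - 1) choose (j - 1)) = ((n - j) choose j) * j"
  proof -
    have e2: "n - j - 1 = N" using N by simp
    have e3: "j - 1 = J" using J by simp
    show ?thesis unfolding e2 e3 N unfolding J by (simp only: diff_Suc_1 Suc_times_binomial_eq)
  qed
  have "int ((n - j) * ((n - j - 1) choose (j - 1))) = int (((n - j) choose j) * j)"
    by (simp only: eq)
  hence key: "int (n - j) * int ((n - j - 1) choose (j - 1)) = int ((n - j) choose j) * int j"
    by (simp only: of_nat_mult)
  have nj: "int (n - j) = int n - int j" using assms by simp
  have "(int n - 3 * int j) * int ((n - j) choose j)
        = int (n - j) * (int ((n - j) choose j) - 2 * int ((n - j - 1) choose (j - 1)))"
    using key nj by (simp add: algebra_simps)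
  moreover have "int (n - j) \<noteq> 0" using assms by simp
  ultimately show ?thesis unfolding dickson3_coeff_def by simp
qed

lemma dickson_zero: "n > 0 \<Longrightarrow> dickson3_coeff n 0 = 1"
  unfolding dickson3_coeff_def by simp

lemma int_key:
  fixes p k m j :: nat
  assumes p: "prime p" and p2: "p \<noteq> 2" and nm: "p ^ k = 2 * m + 1" and j1: "1 \<le> j" and jm: "j \<le> m"
  shows "int p dvd (2 * dickson3_coeff (p ^ k) j * (-1) ^ j - 3 * int (m choose j) * (-4) ^ j)"
proof -
  define n where "n = p ^ k"
  have jn: "2 * j < n" using nm jm n_def by simp
  define A where "A = int ((2 * j - 1) choose j)"
  define s :: int where "s = (-1) ^ j"
  have ss: "s * s = 1" unfolding s_def by (simp flip: power_mult_distrib)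
  have s1: "(-1::int) ^ (j - 1) = - s" unfolding s_def using j1 by (cases j) auto
  have s4: "(-4::int) ^ j = s * 4 ^ j" unfolding s_def by (simp flip: power_mult_distrib)
  have d1: "int p dvd (int ((n - j) choose j) - zg (int (n - j) - int p ^ k) j)"
    by (rule G_cong[OF p]) (use jn j1 n_def in auto)
  have z1: "zg (int (n - j) - int p ^ k) j = s * A"
  proof -
    have "int (n - j) - int p ^ k = - int j" using jn n_def by simp
    moreover have "zg (- int j) j = (-1) ^ j * int ((j + j - 1) choose j)"
      using j1 by (subst zg_neg) auto
    ultimately show ?thesis unfolding s_def A_def by (simp add: mult_2)
  qed
  have d2: "int p dvd (int ((n - j - 1) choose (j - 1)) - zg (int (n - j - 1) - int p ^ k) (j - 1))"
    by (rule G_cong[OF p]) (use jn j1 n_def in auto)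
  have z2: "zg (int (n - j - 1) - int p ^ k) (j - 1) = - s * A"
  proof -
    have "int (n - j - 1) - int p ^ k = - int (j + 1)" using jn n_def by simp
    moreover have "zg (- int (j + 1)) (j - 1) = (-1) ^ (j - 1) * int ((j - 1 + (j + 1) - 1) choose (j - 1))"
      by (subst zg_neg) (simp_all add: nat_add_distrib)
    moreover have "(j - 1 + (j + 1) - 1) choose (j - 1) = (2 * j - 1) choose j"
    proof -
      have e: "j - 1 + (j + 1) - 1 = 2 * j - 1" using j1 by simp
      have "(2 * j - 1) choose (j - 1) = (2 * j - 1) choose ((2 * j - 1) - (j - 1))"
        by (rule binomial_symmetric) simp
      also have "(2 * j - 1) - (j - 1) = j" using j1 by simp
      finally show ?thesis unfolding e .
    qed
    ultimately show ?thesis unfolding A_def using s1 by simp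
  qed
  have d3: "int p dvd (4 ^ j * int (m choose j) - (-1) ^ j * int ((2 * j) choose j))"
    by (rule M_cong[OF p p2 nm jm])
  have cen: "int ((2 * j) choose j) = 2 * A"
  proof -
    have "(2 * j) choose j = ((2 * j - 1) choose (j - 1)) + ((2 * j - 1) choose j)"
      using j1 by (subst choose_reduce_nat) auto
    moreover have "(2 * j - 1) choose (j - 1) = (2 * j - 1) choose j"
    proof -
      have "(2 * j - 1) choose (j - 1) = (2 * j - 1) choose ((2 * j - 1) - (j - 1))"
        by (rule binomial_symmetric) simp
      also have "(2 * j - 1) - (j - 1) = j" using j1 by simp
      finally show ?thesis .
    qed
    ultimately show ?thesis unfolding A_def by simp
  qed
  have cj: "dickson3_coeff n j = int ((n - j) choose j) - 2 * int ((n - j - 1) choose (j - 1))"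
    by (rule dickson_int) (use j1 jn in auto)
  define X where "X = int ((n - j) choose j) - s * A"
  define Y where "Y = int ((n - j - 1) choose (j - 1)) + s * A"
  define Z where "Z = 4 ^ j * int (m choose j) - s * (2 * A)"
  have "int p dvd X" using d1 z1 X_def by simp
  moreover have "int p dvd Y" using d2 z2 Y_def by simp
  moreover have "int p dvd Z" using d3 cen Z_def s_def by simp
  ultimately have dv: "int p dvd 2 * s * X - 4 * s * Y - 3 * s * Z"
    by (intro dvd_diff dvd_mult) 
  have "2 * dickson3_coeff n j * (-1) ^ j - 3 * int (m choose j) * (-4) ^ j
      = 2 * s * X - 4 * s * Y - 3 * s * Z"
    unfolding cj X_def Y_def Z_def s4 s_def[symmetric]
    by (simp add: algebra_simps)
  with dv have "int p dvd 2 * dickson3_coeff n j * (-1) ^ j - 3 * int (m choose j) * (-4) ^ j"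
    by simp
  thus ?thesis unfolding n_def .
qed


lemma coeff_D3:
  assumes "n > 0"
  shows "coeff (D3 n (1::'a::field)) j = (if j \<le> n div 2 then of_int (dickson3_coeff n j) * (-1) ^ j else 0)"
proof -
  have m: "[:0, -1:] = monom (-1::'a) 1" by (simp add: monom_Suc monom_0)
  have "coeff (D3 n (1::'a)) j = (\<Sum>i\<in>{0..n div 2}. of_int (dickson3_coeff n i) * (if i = j then (-1) ^ i else 0))"
    using assms unfolding D3_def m by (simp add: coeff_sum monom_power)
  also have "\<dots> = (\<Sum>i\<in>{0..n div 2}. if i = j then of_int (dickson3_coeff n j) * (-1) ^ j else 0)"
    by (intro sum.cong) auto
  also have "\<dots> = (if j \<le> n div 2 then of_int (dickson3_coeff n j) * (-1) ^ j else 0)"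
    by (simp add: sum.delta)
  finally show ?thesis .
qed

lemma coeff_lin:
  "coeff ([:1, c:] ^ m) j = (of_nat (m choose j) * c ^ j :: 'a::comm_ring_1)"
proof (cases "j \<le> m")
  case True thus ?thesis by (simp add: coeff_linear_poly_power)
next
  case False
  have d1: "degree [:1, c:] \<le> 1" by (rule order_trans[OF degree_pCons_le]) simp
  have "degree [:1, c:] * m \<le> 1 * m" by (rule mult_le_mono1) (rule d1)
  hence "degree ([:1, c:] ^ m) \<le> m" using degree_power_le[of "[:1, c:]" m] by linarith
  hence c0: "coeff ([:1, c:] ^ m) j = 0" using False by (simp add: coeff_eq_0)
  have mj: "m choose j = 0" using False by (simp add: binomial_eq_0)
  show ?thesis by (simp only: c0 mj of_nat_0 mult_zero_left)
qed

theorem proposition2p7: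
  fixes p k :: nat
  assumes "CHAR('a::{field,finite}) = p" and "p > 3" and "k > 0"
  shows "(2::'a poly) ^ (p ^ k) * D3 (p ^ k) (1::'a) + 1
           = 3 * ([:1, -4:] :: 'a poly) ^ ((p ^ k - 1) div 2)"
proof -
  define n where "n = p ^ k"
  have cpos: "CHAR('a) > 0" by (rule finite_imp_CHAR_pos) simp
  have pc: "prime CHAR('a)" by (rule prime_CHAR_semidom[OF cpos])
  hence p: "prime p" using assms(1) by simp
  have p2: "p \<noteq> 2" using assms(2) by simp
  have "odd p" using prime_odd_nat[OF p] assms(2) by simp
  hence "odd n" unfolding n_def by simp
  then obtain m where nm: "n = 2 * m + 1" using oddE by blast
  have mdef: "(p ^ k - 1) div 2 = m" using nm n_def by simp
  have npos: "n > 0" using nm by simp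
  have ndiv: "n div 2 = m" using nm by simp
  have two: "(2::'a poly) ^ n = 2"
  proof -
    have "((1::'a poly) + 1) ^ n = 1 ^ n + 1 ^ n"
      by (rule freshmans_dream'[where n = k]) (use pc assms(1) n_def in simp_all)
    thus ?thesis by simp
  qed
  have ch: "\<And>x y. int p dvd (x - y) \<Longrightarrow> (of_int x :: 'a) = of_int y"
  proof -
    fix x y :: int assume "int p dvd (x - y)"
    hence "(of_int (x - y) :: 'a) = 0" using of_int_eq_0_iff_char_dvd[where 'a='a, of "x - y"] assms(1) by simp
    thus "(of_int x :: 'a) = of_int y" by simp
  qed
  have "2 * D3 n (1::'a) + 1 = 3 * [:1, -4:] ^ m"
  proof (rule poly_eqI)
    fix j
    have l: "coeff (2 * D3 n (1::'a) + 1) j = 2 * coeff (D3 n 1) j + (if j = 0 then 1 else 0)"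
      by (simp add: numeral_poly coeff_1)
    have r: "coeff (3 * [:1, -4:] ^ m) j = 3 * (of_nat (m choose j) * (-4) ^ j :: 'a)"
      by (simp add: numeral_poly coeff_lin)
    show "coeff (2 * D3 n (1::'a) + 1) j = coeff (3 * [:1, -4:] ^ m) j"
    proof (cases "j = 0")
      case True
      then show ?thesis unfolding l r coeff_D3[OF npos] using dickson_zero[OF npos] by simp
    next
      case False
      show ?thesis
      proof (cases "j \<le> m")
        case True
        have "int p dvd (2 * dickson3_coeff (p ^ k) j * (-1) ^ j - 3 * int (m choose j) * (-4) ^ j)"
          by (rule int_key[OF p p2]) (use nm n_def False True in auto)
        hence "(of_int (2 * dickson3_coeff n j * (-1) ^ j) :: 'a) = of_int (3 * int (m choose j) * (-4) ^ j)"
          unfolding n_def by (rule ch)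
        hence "2 * (of_int (dickson3_coeff n j) * (-1) ^ j) = 3 * (of_nat (m choose j) * (-4) ^ j :: 'a)"
          by (simp add: algebra_simps)
        thus ?thesis unfolding l r coeff_D3[OF npos] ndiv using True False by simp
      next
        case False
        hence mj: "m choose j = 0" by (simp add: binomial_eq_0)
        show ?thesis unfolding l r coeff_D3[OF npos] ndiv using \<open>j \<noteq> 0\<close> False by (simp add: mj)
      qed
    qed
  qed
  thus ?thesis using two mdef by (simp add: n_def)
qed

end
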